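(* Let $X$ be a two-sided quaternionic Banach space and $T\in\mathcal{B}(X)$. The following three statements are equivalent: (i) $T$ is power-bounded, i.e. $\sup_{n\in\mathbb{N}}\|T^n\|<\infty$; (ii) every $s\in\mathbb{H}$ with $|s|>1$ lies in $\rho_S(T)$, and there exists a constant $C>0$ such that $$\|\mathcal{Y}_L^n(s,T)\|\le\frac{C}{(1-\frac{1}{|s|})^n}\quad\text{for all } s\in\mathbb{H} \text{ with } |s|>1 \text{ and all } n\in\mathbb{N};$$ (iii) every $s\in\mathbb{H}$ with $|s|>1$ lies in $\rho_S(T)$, and there exists a constant $C>0$ such that $$\|\mathcal{Y}_R^n(s,T)\|\le\frac{C}{(1-\frac{1}{|s|})^n}\quad\text{for all } s\in\mathbb{H} \text{ with } |s|>1 \text{ and all } n\in\mathbb{N}.$$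
   Context: $\mathbb{N}$ is the set of positive integers. $\mathbb{H}$ denotes the real algebra of quaternions; for $s\in\mathbb{H}$, $\overline{s}$ is its conjugate, $\mathrm{Re}(s)$ its real part, $|s|$ its modulus. $X$ is a two-sided vector space over $\mathbb{H}$ which is a Banach space; $\mathcal{B}(X)$ is the algebra of bounded right $\mathbb{H}$-linear operators on $X$ with identity $\mathcal{I}$ and operator norm; $(sT)(v)=s(Tv)$, $(Ts)(v)=T(sv)$. For $s\in\mathbb{H}$ put $Q_s(T)=T^2-2\mathrm{Re}(s)T+|s|^2\mathcal{I}$; $\rho_S(T)=\{s\in\mathbb{H}: Q_s(T)\text{ invertible in }\mathcal{B}(X)\}$. For $s\in\rho_S(T)$ and $n\in\mathbb{N}$ define $$S_L^{-n}(s,T)=Q_s(T)^{-n}\sum_{m=0}^{n}\binom{n}{m}(-T)^m\overline{s}^{\,n-m},\qquad S_R^{-n}(s,T)=\sum_{m=0}^{n}\binom{n}{m}\overline{s}^{\,n-m}(-T)^mQ_s(T)^{-n},$$ and the (powers of the) left and right spherical Yosida approximations $$\mathcal{Y}_L^n(s,T)=T^nS_L^{-n}(s,T)s^n,\qquad \mathcal{Y}_R^n(s,T)=s^nS_R^{-n}(s,T)T^n.$$ *)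

theory Defs
  imports "HOL-Analysis.Analysis"
begin

datatype quat = Quat (qRe: real) (qIm1: real) (qIm2: real) (qIm3: real)

lemma quat_eq_iff: "x = y \<longleftrightarrow> qRe x = qRe y \<and> qIm1 x = qIm1 y \<and> qIm2 x = qIm2 y \<and> qIm3 x = qIm3 y"
  by (cases x; cases y) auto

instantiation quat :: ring_1
begin
definition "0 = Quat 0 0 0 0"
definition "1 = Quat 1 0 0 0"
definition "x + y = Quat (qRe x + qRe y) (qIm1 x + qIm1 y) (qIm2 x + qIm2 y) (qIm3 x + qIm3 y)"
definition "x - y = Quat (qRe x - qRe y) (qIm1 x - qIm1 y) (qIm2 x - qIm2 y) (qIm3 x - qIm3 y)"
definition "- x = Quat (- qRe x) (- qIm1 x) (- qIm2 x) (- qIm3 x)"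
definition "x * y = Quat
   (qRe x * qRe y - qIm1 x * qIm1 y - qIm2 x * qIm2 y - qIm3 x * qIm3 y)
   (qRe x * qIm1 y + qIm1 x * qRe y + qIm2 x * qIm3 y - qIm3 x * qIm2 y)
   (qRe x * qIm2 y - qIm1 x * qIm3 y + qIm2 x * qRe y + qIm3 x * qIm1 y)
   (qRe x * qIm3 y + qIm1 x * qIm2 y - qIm2 x * qIm1 y + qIm3 x * qRe y)"
instance
  by standard (auto simp: quat_eq_iff zero_quat_def one_quat_def plus_quat_def minus_quat_def
      uminus_quat_def times_quat_def algebra_simps)
end

definition qcnj :: "quat \<Rightarrow> quat" where
  "qcnj x = Quat (qRe x) (- qIm1 x) (- qIm2 x) (- qIm3 x)"

definition qnorm :: "quat \<Rightarrow> real" where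
  "qnorm x = sqrt ((qRe x)\<^sup>2 + (qIm1 x)\<^sup>2 + (qIm2 x)\<^sup>2 + (qIm3 x)\<^sup>2)"

definition qreal :: "real \<Rightarrow> quat" where
  "qreal r = Quat r 0 0 0"

text \<open>The underlying real Banach space is the type 'a; L s v is the left product s v,
  R s v is the right product v s.\<close>
definition two_sided_qbanach :: "(quat \<Rightarrow> 'a::banach \<Rightarrow> 'a) \<Rightarrow> (quat \<Rightarrow> 'a \<Rightarrow> 'a) \<Rightarrow> bool" where
  "two_sided_qbanach L R \<longleftrightarrow>
     (\<forall>s t v. L (s + t) v = L s v + L t v) \<and>
     (\<forall>s v w. L s (v + w) = L s v + L s w) \<and>
     (\<forall>s t v. L (s * t) v = L s (L t v)) \<and>
     (\<forall>v. L 1 v = v) \<and>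
     (\<forall>s t v. R (s + t) v = R s v + R t v) \<and>
     (\<forall>s v w. R s (v + w) = R s v + R s w) \<and>
     (\<forall>s t v. R (s * t) v = R t (R s v)) \<and>
     (\<forall>v. R 1 v = v) \<and>
     (\<forall>s t v. L s (R t v) = R t (L s v)) \<and>
     (\<forall>r v. L (qreal r) v = r *\<^sub>R v) \<and>
     (\<forall>r v. R (qreal r) v = r *\<^sub>R v) \<and>
     (\<forall>s v. norm (L s v) = qnorm s * norm v) \<and>
     (\<forall>s v. norm (R s v) = qnorm s * norm v)"

definition qbounded_op :: "(quat \<Rightarrow> 'a::banach \<Rightarrow> 'a) \<Rightarrow> ('a \<Rightarrow> 'a) \<Rightarrow> bool" where
  "qbounded_op R T \<longleftrightarrow> bounded_linear T \<and> (\<forall>s v. T (R s v) = R s (T v))"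

definition Qop :: "quat \<Rightarrow> ('a::real_vector \<Rightarrow> 'a) \<Rightarrow> 'a \<Rightarrow> 'a" where
  "Qop s T = (\<lambda>v. T (T v) - (2 * qRe s) *\<^sub>R T v + (qnorm s)\<^sup>2 *\<^sub>R v)"

definition S_resolvent_set :: "(quat \<Rightarrow> 'a::banach \<Rightarrow> 'a) \<Rightarrow> ('a \<Rightarrow> 'a) \<Rightarrow> quat set" where
  "S_resolvent_set R T = {s. \<exists>S. qbounded_op R S \<and> S \<circ> Qop s T = id \<and> Qop s T \<circ> S = id}"

text \<open>Q_s(T)^{-1}; meaningful for s in the S-resolvent set.\<close>
definition Qinv :: "quat \<Rightarrow> ('a::real_vector \<Rightarrow> 'a) \<Rightarrow> 'a \<Rightarrow> 'a" where
  "Qinv s T = inv (Qop s T)"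

definition SL_neg :: "(quat \<Rightarrow> 'a::banach \<Rightarrow> 'a) \<Rightarrow> nat \<Rightarrow> quat \<Rightarrow> ('a \<Rightarrow> 'a) \<Rightarrow> 'a \<Rightarrow> 'a" where
  "SL_neg L n s T = (\<lambda>v. (Qinv s T ^^ n)
      (\<Sum>m=0..n. real (n choose m) *\<^sub>R (((\<lambda>w. - T w) ^^ m) (L (qcnj s ^ (n - m)) v))))"

definition SR_neg :: "(quat \<Rightarrow> 'a::banach \<Rightarrow> 'a) \<Rightarrow> nat \<Rightarrow> quat \<Rightarrow> ('a \<Rightarrow> 'a) \<Rightarrow> 'a \<Rightarrow> 'a" where
  "SR_neg L n s T = (\<lambda>v.
      (\<Sum>m=0..n. real (n choose m) *\<^sub>R L (qcnj s ^ (n - m)) (((\<lambda>w. - T w) ^^ m) ((Qinv s T ^^ n) v))))"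

definition YL :: "(quat \<Rightarrow> 'a::banach \<Rightarrow> 'a) \<Rightarrow> nat \<Rightarrow> quat \<Rightarrow> ('a \<Rightarrow> 'a) \<Rightarrow> 'a \<Rightarrow> 'a" where
  "YL L n s T = (\<lambda>v. (T ^^ n) (SL_neg L n s T (L (s ^ n) v)))"

definition YR :: "(quat \<Rightarrow> 'a::banach \<Rightarrow> 'a) \<Rightarrow> nat \<Rightarrow> quat \<Rightarrow> ('a \<Rightarrow> 'a) \<Rightarrow> 'a \<Rightarrow> 'a" where
  "YR L n s T = (\<lambda>v. L (s ^ n) (SR_neg L n s T ((T ^^ n) v)))"

end

theory Submission
  imports Defs
begin


typedef (overloaded) 'a bop = "{f :: 'a::real_normed_vector \<Rightarrow> 'a. bounded_linear f}"
  morphisms app Bop by (auto intro: bounded_linear_zero)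

setup_lifting type_definition_bop

instantiation bop :: (real_normed_vector) "{ring, monoid_mult, real_vector}"
begin
lift_definition zero_bop :: "'a bop" is "\<lambda>x. 0" by (rule bounded_linear_zero)
lift_definition one_bop :: "'a bop" is "\<lambda>x. x" by (rule bounded_linear_ident)
lift_definition plus_bop :: "'a bop \<Rightarrow> 'a bop \<Rightarrow> 'a bop" is "\<lambda>f g x. f x + g x" by (rule bounded_linear_add)
lift_definition minus_bop :: "'a bop \<Rightarrow> 'a bop \<Rightarrow> 'a bop" is "\<lambda>f g x. f x - g x" by (rule bounded_linear_sub)
lift_definition uminus_bop :: "'a bop \<Rightarrow> 'a bop" is "\<lambda>f x. - f x" by (rule bounded_linear_minus)
lift_definition times_bop :: "'a bop \<Rightarrow> 'a bop \<Rightarrow> 'a bop" is "\<lambda>f g x. f (g x)"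
  by (rule bounded_linear_compose[unfolded o_def])
lift_definition scaleR_bop :: "real \<Rightarrow> 'a bop \<Rightarrow> 'a bop" is "\<lambda>r f x. r *\<^sub>R f x"
  by (simp add: bounded_linear_const_scaleR)
instance
  apply standard
  apply (transfer; auto simp: algebra_simps linear_simps scaleR_add_right)+
  done


lemma app_simps[simp]:
  "app 0 v = 0" "app 1 v = v" "app (f + g) v = app f v + app g v"
  "app (f - g) v = app f v - app g v" "app (- f) v = - app f v"
  "app (f * g) v = app f (app g v)" "app (r *\<^sub>R f) v = r *\<^sub>R app f v"
  by (transfer, simp)+
end

lemma bop_eqI: "(\<And>v. app f v = app g v) \<Longrightarrow> f = g"
  by (metis app_inject ext)

lemma mult_scaleR_left_bop[simp]: "(r *\<^sub>R f) * (g :: 'a::real_normed_vector bop) = r *\<^sub>R (f * g)"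
  by (rule bop_eqI) simp
lemma mult_scaleR_right_bop[simp]: "(f :: 'a::real_normed_vector bop) * (r *\<^sub>R g) = r *\<^sub>R (f * g)"
  by (rule bop_eqI) (simp add: linear_simps app[simplified])


type_synonym 'a B = "'a bop"

lemma bop_series_add_commuting:
  fixes x y :: "'a::real_normed_vector bop"
  defines S_def: "S \<equiv> \<lambda>x n. x^n /\<^sub>R fact n"
  assumes comm: "x * y = y * x"
  shows "S (x + y) n = (\<Sum>i\<le>n. S x i * S y (n - i))"
proof (induct n)
  case 0
  show ?case
    unfolding S_def by simp
next
  case (Suc n)
  have S_Suc: "\<And>x n. S x (Suc n) = (x * S x n) /\<^sub>R real (Suc n)"
    unfolding S_def by (simp del: mult_Suc)
  then have times_S: "\<And>x n. x * S x n = real (Suc n) *\<^sub>R S x (Suc n)"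
    by simp
  have S_comm: "\<And>n. S x n * y = y * S x n"
    by (simp add: power_commuting_commutes comm S_def)
  have "real (Suc n) *\<^sub>R S (x + y) (Suc n) = (x + y) * (\<Sum>i\<le>n. S x i * S y (n - i))"
    by (metis Suc.hyps times_S)
  also have "\<dots> = x * (\<Sum>i\<le>n. S x i * S y (n - i)) + y * (\<Sum>i\<le>n. S x i * S y (n - i))"
    by (rule distrib_right)
  also have "\<dots> = (\<Sum>i\<le>n. x * S x i * S y (n - i)) + (\<Sum>i\<le>n. S x i * y * S y (n - i))"
    by (simp add: sum_distrib_left ac_simps S_comm)
  also have "\<dots> = (\<Sum>i\<le>n. x * S x i * S y (n - i)) + (\<Sum>i\<le>n. S x i * (y * S y (n - i)))"
    by (simp add: ac_simps)
  also have "\<dots> = (\<Sum>i\<le>n. real (Suc i) *\<^sub>R (S x (Suc i) * S y (n - i)))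
                + (\<Sum>i\<le>n. real (Suc n - i) *\<^sub>R (S x i * S y (Suc n - i)))"
    by (simp add: times_S Suc_diff_le)
  also have "(\<Sum>i\<le>n. real (Suc i) *\<^sub>R (S x (Suc i) * S y (n - i)))
           = (\<Sum>i\<le>Suc n. real i *\<^sub>R (S x i * S y (Suc n - i)))"
    by (subst sum.atMost_Suc_shift) simp
  also have "(\<Sum>i\<le>n. real (Suc n - i) *\<^sub>R (S x i * S y (Suc n - i)))
           = (\<Sum>i\<le>Suc n. real (Suc n - i) *\<^sub>R (S x i * S y (Suc n - i)))"
    by simp
  also have "(\<Sum>i\<le>Suc n. real i *\<^sub>R (S x i * S y (Suc n - i)))
           + (\<Sum>i\<le>Suc n. real (Suc n - i) *\<^sub>R (S x i * S y (Suc n - i)))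
           = (\<Sum>i\<le>Suc n. real (Suc n) *\<^sub>R (S x i * S y (Suc n - i)))"
    by (simp flip: sum.distrib scaleR_add_left of_nat_add)
  also have "\<dots> = real (Suc n) *\<^sub>R (\<Sum>i\<le>Suc n. S x i * S y (Suc n - i))"
    by (simp only: scaleR_right.sum)
  finally show
    "S (x + y) (Suc n) = (\<Sum>i\<le>Suc n. S x i * S y (Suc n - i))"
    by (simp del: sum.cl_ivl_Suc)
qed

lemma bop_binomial:
  fixes x y :: "'a::real_normed_vector bop"
  assumes comm: "x * y = y * x"
  shows "(x + y)^n = (\<Sum>i\<le>n. real (n choose i) *\<^sub>R (x^i * y^(n - i)))"
proof -
  have "(x+y)^n = fact n *\<^sub>R ((x+y)^n /\<^sub>R fact n)" by simp
  also have "\<dots> = fact n *\<^sub>R (\<Sum>i\<le>n. (x^i /\<^sub>R fact i) * (y^(n-i) /\<^sub>R fact (n-i)))"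
    using bop_series_add_commuting[OF comm, of n] by simp
  also have "\<dots> = (\<Sum>i\<le>n. real (n choose i) *\<^sub>R (x^i * y^(n - i)))"
    unfolding scaleR_right.sum
  proof (rule sum.cong[OF refl])
    fix i assume "i \<in> {..n}"
    then have "real (n choose i) = fact n / (fact i * fact (n-i))"
      by (simp add: binomial_fact)
    then show "fact n *\<^sub>R ((x^i /\<^sub>R fact i) * (y^(n-i) /\<^sub>R fact (n-i))) =
        real (n choose i) *\<^sub>R (x^i * y^(n - i))"
      by (simp add: divide_inverse)
  qed
  finally show ?thesis .
qed


lemma qcnj_mult: "qcnj (a * b) = qcnj b * qcnj a"
  by (simp add: quat_eq_iff qcnj_def times_quat_def algebra_simps)
lemma qcnj_qcnj[simp]: "qcnj (qcnj a) = a"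
  by (simp add: quat_eq_iff qcnj_def)
lemma qcnj_one[simp]: "qcnj 1 = 1" by (simp add: qcnj_def one_quat_def)
lemma qcnj_power: "qcnj (a ^ n) = qcnj a ^ n"
proof (induction n)
  case (Suc n)
  have "qcnj (a ^ Suc n) = qcnj (a ^ n) * qcnj a" by (simp add: qcnj_mult)
  then show ?case using Suc.IH by (simp add: power_commutes)
qed simp
lemma qreal_comm: "qreal r * q = q * qreal r"
  by (simp add: quat_eq_iff qreal_def times_quat_def)
lemma qreal_mult: "qreal a * qreal b = qreal (a * b)"
  by (simp add: quat_eq_iff qreal_def times_quat_def)
lemma qreal_add: "qreal a + qreal b = qreal (a + b)"
  by (simp add: quat_eq_iff qreal_def plus_quat_def)
lemma qreal_minus: "qreal a - qreal b = qreal (a - b)" "- qreal a = qreal (- a)"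
  by (simp_all add: quat_eq_iff qreal_def minus_quat_def uminus_quat_def)
lemma qreal_one: "qreal 1 = 1" and qreal_zero: "qreal 0 = 0"
  by (simp_all add: qreal_def one_quat_def zero_quat_def)
lemma mult_qcnj: "q * qcnj q = qreal ((qnorm q)^2)" "qcnj q * q = qreal ((qnorm q)^2)"
  by (simp_all add: quat_eq_iff qreal_def times_quat_def qcnj_def qnorm_def algebra_simps power2_eq_square)
lemma add_qcnj: "q + qcnj q = qreal (2 * qRe q)" "qcnj q + q = qreal (2 * qRe q)"
  by (simp_all add: quat_eq_iff qreal_def plus_quat_def qcnj_def)
lemma qnorm_mult: "qnorm (a * b) = qnorm a * qnorm b"
  unfolding qnorm_def real_sqrt_mult[symmetric]
  by (rule arg_cong[where f=sqrt]) (simp add: times_quat_def power2_eq_square algebra_simps)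
lemma qnorm_one[simp]: "qnorm 1 = 1"
  by (simp add: qnorm_def one_quat_def)
lemma qnorm_power: "qnorm (a ^ n) = qnorm a ^ n"
  by (induction n) (auto simp: qnorm_mult)
lemma qnorm_qcnj[simp]: "qnorm (qcnj a) = qnorm a"
  by (simp add: qnorm_def qcnj_def)
lemma qRe_qcnj[simp]: "qRe (qcnj a) = qRe a"
  by (simp add: qcnj_def)
lemma qnorm_qreal[simp]: "qnorm (qreal r) = \<bar>r\<bar>" and qRe_qreal[simp]: "qRe (qreal r) = r"
  and qcnj_qreal[simp]: "qcnj (qreal r) = qreal r"
  by (simp_all add: qnorm_def qreal_def qcnj_def quat_eq_iff)
lemma qnorm_nonneg: "qnorm q \<ge> 0" by (simp add: qnorm_def)
lemma qcnj_comm: "q * qcnj q = qcnj q * q" by (simp add: mult_qcnj)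

definition unitim :: "quat \<Rightarrow> bool" where
  "unitim j \<longleftrightarrow> qRe j = 0 \<and> (qIm1 j)\<^sup>2 + (qIm2 j)\<^sup>2 + (qIm3 j)\<^sup>2 = 1"

definition inJ :: "quat \<Rightarrow> quat \<Rightarrow> bool" where
  "inJ j p \<longleftrightarrow> (\<exists>a b. p = qreal a + qreal b * j)"

definition qJ :: "quat \<Rightarrow> quat" where
  "qJ q = (let \<nu> = sqrt ((qIm1 q)\<^sup>2 + (qIm2 q)\<^sup>2 + (qIm3 q)\<^sup>2) in
     if \<nu> = 0 then Quat 0 1 0 0 else Quat 0 (qIm1 q / \<nu>) (qIm2 q / \<nu>) (qIm3 q / \<nu>))"

lemma unitim_qJ: "unitim (qJ q)"
proof -
  define \<nu> where "\<nu> = sqrt ((qIm1 q)\<^sup>2 + (qIm2 q)\<^sup>2 + (qIm3 q)\<^sup>2)"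
  have s: "\<nu>\<^sup>2 = (qIm1 q)\<^sup>2 + (qIm2 q)\<^sup>2 + (qIm3 q)\<^sup>2" unfolding \<nu>_def by simp
  show ?thesis
  proof (cases "\<nu> = 0")
    case True then show ?thesis by (simp add: qJ_def unitim_def \<nu>_def[symmetric] Let_def)
  next
    case False
    then have "(qIm1 q / \<nu>)\<^sup>2 + (qIm2 q / \<nu>)\<^sup>2 + (qIm3 q / \<nu>)\<^sup>2 = 1"
      by (simp add: power_divide s[symmetric] add_divide_distrib[symmetric])
    with False show ?thesis by (simp add: qJ_def unitim_def \<nu>_def[symmetric] Let_def)
  qed
qed

lemma inJ_qJ: "inJ (qJ q) q"
proof -
  define \<nu> where "\<nu> = sqrt ((qIm1 q)\<^sup>2 + (qIm2 q)\<^sup>2 + (qIm3 q)\<^sup>2)"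
  show ?thesis
  proof (cases "\<nu> = 0")
    case True
    then have "qIm1 q = 0" "qIm2 q = 0" "qIm3 q = 0" unfolding \<nu>_def
      by (simp_all add: add_nonneg_eq_0_iff)
    then show ?thesis unfolding inJ_def
      by (intro exI[of _ "qRe q"] exI[of _ 0]) (simp add: quat_eq_iff qreal_def plus_quat_def times_quat_def)
  next
    case False
    then show ?thesis unfolding inJ_def
      by (intro exI[of _ "qRe q"] exI[of _ \<nu>])
        (simp add: quat_eq_iff qreal_def plus_quat_def times_quat_def qJ_def \<nu>_def[symmetric] Let_def)
  qed
qed

lemma unitim_sq: "unitim j \<Longrightarrow> j * j = - 1"
  by (simp add: unitim_def quat_eq_iff times_quat_def uminus_quat_def one_quat_def power2_eq_square algebra_simps)
lemma unitim_cnj: "unitim j \<Longrightarrow> qcnj j = - j"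
  by (simp add: unitim_def quat_eq_iff qcnj_def uminus_quat_def)
lemma unitim_norm: "unitim j \<Longrightarrow> qnorm j = 1"
  by (simp add: unitim_def qnorm_def)

lemma inJ_mult:
  assumes j: "unitim j" and p: "inJ j p" and q: "inJ j q" shows "inJ j (p * q)"
proof -
  obtain a b c d where pq: "p = qreal a + qreal b * j" "q = qreal c + qreal d * j"
    using p q unfolding inJ_def by blast
  have jj: "j * j = - 1" using unitim_sq[OF j] .
  have "p * q = qreal a * qreal c + qreal a * (qreal d * j) + qreal b * j * qreal c + qreal b * (j * qreal d) * j"
    unfolding pq by (simp add: algebra_simps)
  also have "\<dots> = qreal (a*c) + qreal (a*d) * j + qreal (b*c) * j + qreal (b*d) * (j * j)"
    by (simp add: qreal_mult mult.assoc[symmetric] qreal_comm[of _ j, symmetric])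
       (simp add: mult.assoc qreal_comm[of _ j] qreal_mult)
  also have "\<dots> = qreal (a*c - b*d) + qreal (a*d + b*c) * j"
    unfolding jj by (simp add: quat_eq_iff qreal_def plus_quat_def times_quat_def uminus_quat_def one_quat_def algebra_simps)
  finally show ?thesis unfolding inJ_def by blast
qed


lemma inJ_one: "inJ j 1"
  unfolding inJ_def by (intro exI[of _ 1] exI[of _ 0]) (simp add: qreal_one qreal_zero)

lemma inJ_power: "unitim j \<Longrightarrow> inJ j p \<Longrightarrow> inJ j (p ^ n)"
  by (induction n) (auto simp: inJ_one inJ_mult)

lemma inJ_qcnj: "unitim j \<Longrightarrow> inJ j p \<Longrightarrow> inJ j (qcnj p)"
  unfolding inJ_def
  apply (elim exE)
  subgoal for a b
    by (rule exI[of _ a], rule exI[of _ "-b"])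
       (simp add: unitim_def quat_eq_iff qreal_def plus_quat_def times_quat_def qcnj_def)
  done

lemma inJ_decomp:
  assumes j: "unitim j" and p: "inJ j p"
  shows "\<exists>b. j * qcnj p - j * p = qreal (2*b) \<and> qcnj p * j - p * j = qreal (2*b)
             \<and> p = qreal (qRe p) + qreal b * j"
proof -
  obtain a b where pq: "p = qreal a + qreal b * j" using p unfolding inJ_def by blast
  have j0: "qRe j = 0" and j1: "(qIm1 j)\<^sup>2 + (qIm2 j)\<^sup>2 + (qIm3 j)\<^sup>2 = 1" using j by (auto simp: unitim_def)
  have key: "b * (qIm1 j * qIm1 j) + b*(qIm2 j * qIm2 j) + b * (qIm3 j*qIm3 j) = b"
    using arg_cong[OF j1, of "\<lambda>x. b*x"] by (simp add: power2_eq_square distrib_left)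
  have r: "qRe p = a" using j0 unfolding pq by (simp add: qreal_def plus_quat_def times_quat_def)
  show ?thesis
    apply (rule exI[of _ b])
    using j0 j1 unfolding pq r
    apply (simp add: quat_eq_iff qreal_def plus_quat_def times_quat_def qcnj_def minus_quat_def)
    using key by linarith
qed


definition bn :: "'a::real_normed_vector bop \<Rightarrow> real" where "bn f = onorm (app f)"

lemma bl_app: "bounded_linear (app f)" using app by auto

lemma bn_app: "norm (app f v) \<le> bn f * norm v"
  unfolding bn_def by (rule onorm[OF bl_app])

lemma bn_nonneg: "0 \<le> bn f" unfolding bn_def by (rule onorm_pos_le[OF bl_app])

lemma bn_bound: "0 \<le> c \<Longrightarrow> (\<And>v. norm (app f v) \<le> c * norm v) \<Longrightarrow> bn f \<le> c"
  unfolding bn_def by (rule onorm_bound)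

lemma bn_add: "bn (f + g) \<le> bn f + bn g"
  by (rule bn_bound) (auto simp: bn_nonneg add_nonneg_nonneg distrib_right
      intro!: order_trans[OF norm_triangle_ineq] add_mono bn_app)

lemma bn_mult: "bn (f * g) \<le> bn f * bn g"
proof (rule bn_bound)
  show "0 \<le> bn f * bn g" by (simp add: bn_nonneg)
  fix v
  have "norm (app (f * g) v) \<le> bn f * norm (app g v)" by (simp add: bn_app)
  also have "\<dots> \<le> bn f * (bn g * norm v)" by (rule mult_left_mono[OF bn_app bn_nonneg])
  finally show "norm (app (f * g) v) \<le> bn f * bn g * norm v" by (simp add: mult.assoc)
qed

lemma bn_one: "bn (1 :: 'a::real_normed_vector bop) \<le> 1"
  by (rule bn_bound) auto

lemma bn_power: "bn (f ^ n) \<le> bn f ^ n"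
proof (induction n)
  case 0 then show ?case by (simp add: bn_one)
next
  case (Suc n)
  have "bn (f ^ Suc n) \<le> bn f * bn (f ^ n)" by (simp add: bn_mult)
  also have "\<dots> \<le> bn f * bn f ^ n" by (rule mult_left_mono[OF Suc.IH bn_nonneg])
  finally show ?case by simp
qed

lemma bn_scale: "bn (c *\<^sub>R f) \<le> \<bar>c\<bar> * bn f"
  by (rule bn_bound) (auto simp: bn_nonneg mult.assoc intro!: mult_left_mono bn_app)

lemma app_power: "app (f ^ n) = app f ^^ n"
  by (induction n) (auto simp: fun_eq_iff)

lemma app_sum: "app (sum f A) v = (\<Sum>i\<in>A. app (f i) v)"
  by (induction A rule: infinite_finite_induct) auto

lemma app_Bop: "bounded_linear f \<Longrightarrow> app (Bop f) = f"
  by (simp add: Bop_inverse)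

locale qsp =
  fixes L R :: "quat \<Rightarrow> 'a::banach \<Rightarrow> 'a"
  assumes tsq: "two_sided_qbanach L R"
begin

lemma L_addq: "L (s + t) v = L s v + L t v" and L_addv: "L s (v + w) = L s v + L s w"
  and L_mult: "L (s * t) v = L s (L t v)" and L_one: "L 1 v = v"
  and R_addq: "R (s + t) v = R s v + R t v" and R_addv: "R s (v + w) = R s v + R s w"
  and R_mult: "R (s * t) v = R t (R s v)" and R_one: "R 1 v = v"
  and LR: "L s (R t v) = R t (L s v)"
  and L_real: "L (qreal r) v = r *\<^sub>R v" and R_real: "R (qreal r) v = r *\<^sub>R v"
  and normL: "norm (L s v) = qnorm s * norm v" and normR: "norm (R s v) = qnorm s * norm v"
  using tsq unfolding two_sided_qbanach_def by auto

lemma R_scale: "R q (c *\<^sub>R v) = c *\<^sub>R R q v"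
  by (metis LR L_real)
lemma L_scale: "L q (c *\<^sub>R v) = c *\<^sub>R L q v"
  by (metis L_mult L_real qreal_comm)

lemma bl_R: "bounded_linear (R q)"
  by (rule bounded_linear_intro[where K="qnorm q"]) (auto simp: R_addv R_scale normR)
lemma bl_L: "bounded_linear (L q)"
  by (rule bounded_linear_intro[where K="qnorm q"]) (auto simp: L_addv L_scale normL)

definition Rb :: "quat \<Rightarrow> 'a bop" where "Rb q = Bop (R q)"
definition Lb :: "quat \<Rightarrow> 'a bop" where "Lb q = Bop (L q)"

lemma app_Rb[simp]: "app (Rb q) = R q" unfolding Rb_def by (rule app_Bop[OF bl_R])
lemma app_Lb[simp]: "app (Lb q) = L q" unfolding Lb_def by (rule app_Bop[OF bl_L])

lemma Rb_mult: "Rb (p * q) = Rb q * Rb p" by (rule bop_eqI) (simp add: R_mult)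
lemma Lb_mult: "Lb (p * q) = Lb p * Lb q" by (rule bop_eqI) (simp add: L_mult)
lemma Rb_add: "Rb (p + q) = Rb p + Rb q" by (rule bop_eqI) (simp add: R_addq)
lemma Lb_add: "Lb (p + q) = Lb p + Lb q" by (rule bop_eqI) (simp add: L_addq)
lemma Rb_real: "Rb (qreal r) = r *\<^sub>R 1" by (rule bop_eqI) (simp add: R_real)
lemma Lb_real: "Lb (qreal r) = r *\<^sub>R 1" by (rule bop_eqI) (simp add: L_real)
lemma Rb_one: "Rb 1 = 1" by (rule bop_eqI) (simp add: R_one)
lemma Rb_diff: "Rb (p - q) = Rb p - Rb q"
proof -
  have "Rb (p - q) + Rb q = Rb p" by (simp add: Rb_add[symmetric])
  then show ?thesis by (simp add: eq_diff_eq)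
qed
lemma Rb_power: "Rb (q ^ n) = Rb q ^ n"
proof (induction n)
  case 0 then show ?case by (simp add: Rb_one)
next
  case (Suc n)
  have "Rb (q ^ Suc n) = Rb (q ^ n) * Rb q" by (simp add: Rb_mult)
  then show ?case using Suc.IH by (simp add: power_commutes)
qed
lemma LR_comm: "Lb p * Rb q = Rb q * Lb p" by (rule bop_eqI) (simp add: LR)
lemma Rb_comm: "p * q = q * p \<Longrightarrow> Rb p * Rb q = Rb q * Rb p"
  by (metis Rb_mult)

definition Pp :: "quat \<Rightarrow> 'a bop" where "Pp j = (1/2) *\<^sub>R (1 + Rb j * Lb j)"
definition Pm :: "quat \<Rightarrow> 'a bop" where "Pm j = (1/2) *\<^sub>R (1 - Rb j * Lb j)"

lemma Pp_Pm: "Pp j + Pm j = 1"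
proof -
  have "Pp j + Pm j = (1/2) *\<^sub>R ((1 + Rb j * Lb j) + (1 - Rb j * Lb j))"
    unfolding Pp_def Pm_def by (simp only: scaleR_add_right)
  also have "(1 + Rb j * Lb j) + (1 - Rb j * Lb j) = (2::real) *\<^sub>R 1"
    by (simp add: scaleR_2)
  finally show ?thesis by simp
qed

lemma decomp:
  assumes j: "unitim j" and p: "inJ j p"
  shows "Lb p = Rb (qcnj p) * Pp j + Rb p * Pm j" "Lb p = Pp j * Rb (qcnj p) + Pm j * Rb p"
proof -
  obtain b where b1: "j * qcnj p - j * p = qreal (2*b)" and b2: "qcnj p * j - p * j = qreal (2*b)"
    and pe: "p = qreal (qRe p) + qreal b * j"
    using inJ_decomp[OF j p] by blast
  have s: "Rb (qcnj p) + Rb p = (2 * qRe p) *\<^sub>R 1"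
    by (simp add: Rb_add[symmetric] add_qcnj Rb_real)
  have Lp: "Lb p = qRe p *\<^sub>R 1 + b *\<^sub>R Lb j"
    by (subst pe) (simp add: Lb_add Lb_mult Lb_real)
  have "Rb (qcnj p) * Pp j + Rb p * Pm j
      = (1/2) *\<^sub>R ((Rb (qcnj p) + Rb p) + (Rb (qcnj p) * Rb j - Rb p * Rb j) * Lb j)"
    unfolding Pp_def Pm_def by (simp add: algebra_simps)
  also have "Rb (qcnj p) * Rb j - Rb p * Rb j = Rb (qreal (2*b))"
    by (simp add: Rb_mult[symmetric] Rb_diff[symmetric] b1)
  also have "(1/2) *\<^sub>R ((Rb (qcnj p) + Rb p) + Rb (qreal (2*b)) * Lb j) = Lb p"
    unfolding s Lp Rb_real by (simp add: scaleR_add_right)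
  finally show "Lb p = Rb (qcnj p) * Pp j + Rb p * Pm j" ..
  have "Pp j * Rb (qcnj p) + Pm j * Rb p
      = (1/2) *\<^sub>R ((Rb (qcnj p) + Rb p) + (Rb j * (Lb j * Rb (qcnj p)) - Rb j * (Lb j * Rb p)))"
    unfolding Pp_def Pm_def by (simp add: algebra_simps)
  also have "Rb j * (Lb j * Rb (qcnj p)) - Rb j * (Lb j * Rb p) = (Rb j * Rb (qcnj p) - Rb j * Rb p) * Lb j"
    by (simp add: algebra_simps) (simp add: mult.assoc[symmetric] LR_comm)
  also have "Rb j * Rb (qcnj p) - Rb j * Rb p = Rb (qreal (2*b))"
    by (simp add: Rb_mult[symmetric] Rb_diff[symmetric] b2)
  also have "(1/2) *\<^sub>R ((Rb (qcnj p) + Rb p) + Rb (qreal (2*b)) * Lb j) = Lb p"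
    unfolding s Lp Rb_real by (simp add: scaleR_add_right)
  finally show "Lb p = Pp j * Rb (qcnj p) + Pm j * Rb p" ..
qed

lemma bn_Rb: "bn (Rb q) \<le> qnorm q"
  by (rule bn_bound) (auto simp: qnorm_nonneg normR)

lemma bn_Pp: assumes "unitim j" shows "bn (Pp j) \<le> 1" "bn (Pm j) \<le> 1"
proof -
  have n: "norm (app (Rb j * Lb j) v) = norm v" for v
    using unitim_norm[OF assms] by (simp add: normR normL)
  show "bn (Pp j) \<le> 1" unfolding Pp_def
    by (rule bn_bound) (auto simp: intro!: order_trans[OF norm_triangle_ineq] simp: n[simplified])
  show "bn (Pm j) \<le> 1" unfolding Pm_def
    by (rule bn_bound) (auto simp: intro!: order_trans[OF norm_triangle_ineq4] simp: n[simplified])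
qed

end


definition cm :: "'a::real_normed_vector bop \<Rightarrow> 'a bop \<Rightarrow> bool" where "cm p q \<longleftrightarrow> p * q = q * p"

lemma cm_refl[simp]: "cm p p" by (simp add: cm_def)
lemma cm_sym: "cm p q \<Longrightarrow> cm q p" by (simp add: cm_def)
lemma cm_one[simp]: "cm p 1" "cm 1 p" by (simp_all add: cm_def)
lemma cm_mult[simp]: "cm p q \<Longrightarrow> cm p r \<Longrightarrow> cm p (q * r)"
  by (simp add: cm_def) (metis mult.assoc)
lemma cm_mult2[simp]: "cm q p \<Longrightarrow> cm r p \<Longrightarrow> cm (q * r) p"
  by (simp add: cm_def) (metis mult.assoc)
lemma cm_add[simp]: "cm p q \<Longrightarrow> cm p r \<Longrightarrow> cm p (q + r)"
  by (simp add: cm_def algebra_simps)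
lemma cm_add2[simp]: "cm q p \<Longrightarrow> cm r p \<Longrightarrow> cm (q + r) p"
  by (simp add: cm_def algebra_simps)
lemma cm_diff[simp]: "cm p q \<Longrightarrow> cm p r \<Longrightarrow> cm p (q - r)"
  by (simp add: cm_def algebra_simps)
lemma cm_diff2[simp]: "cm q p \<Longrightarrow> cm r p \<Longrightarrow> cm (q - r) p"
  by (simp add: cm_def algebra_simps)
lemma cm_minus[simp]: "cm p q \<Longrightarrow> cm p (- q)" "cm q p \<Longrightarrow> cm (- q) p"
  by (simp_all add: cm_def)
lemma cm_scale[simp]: "cm p q \<Longrightarrow> cm p (c *\<^sub>R q)" "cm q p \<Longrightarrow> cm (c *\<^sub>R q) p"
  by (simp_all add: cm_def)
lemma cm_power1: "cm q p \<Longrightarrow> cm (q ^ n) p"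
  by (simp add: cm_def power_commuting_commutes)
lemma cm_power[simp]: "cm p q \<Longrightarrow> cm p (q ^ n)" "cm q p \<Longrightarrow> cm (q ^ n) p"
  by (metis cm_power1 cm_sym)+

lemma cm_inv: "x * Q = 1 \<Longrightarrow> Q * x = 1 \<Longrightarrow> cm Q c \<Longrightarrow> cm x c"
  unfolding cm_def by (metis mult.assoc mult_1_left mult_1_right)

lemma pow_mult_cm: "cm p q \<Longrightarrow> (p * q) ^ n = p ^ n * q ^ n"
proof (induction n)
  case (Suc n)
  have "(p * q) ^ Suc n = p * (q * p ^ n) * q ^ n" using Suc by (simp add: mult.assoc)
  also have "q * p ^ n = p ^ n * q" using cm_power(2)[OF Suc.prems, of n] by (simp add: cm_def)
  finally show ?case by (simp add: mult.assoc)
qed simp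

lemma sum_scale_mult_right: "(\<Sum>m\<in>A. c m *\<^sub>R (f m * g)) = (\<Sum>m\<in>A. c m *\<^sub>R f m) * (g :: 'a::real_normed_vector bop)"
  by (induction A rule: infinite_finite_induct) (auto simp: algebra_simps)
lemma sum_scale_mult_left: "(\<Sum>m\<in>A. c m *\<^sub>R (g * f m)) = (g :: 'a::real_normed_vector bop) * (\<Sum>m\<in>A. c m *\<^sub>R f m)"
  by (induction A rule: infinite_finite_induct) (auto simp: algebra_simps)

lemma binom_sum1:
  assumes "cm c (t :: 'a::real_normed_vector bop)"
  shows "(\<Sum>m=0..n. real (n choose m) *\<^sub>R ((-t)^m * c^(n-m))) = (c - t) ^ n"
proof -
  have "cm (-t) c" using assms by (simp add: cm_sym)
  then have "(-t + c) ^ n = (\<Sum>i\<le>n. real (n choose i) *\<^sub>R ((-t)^i * c^(n - i)))"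
    by (intro bop_binomial) (simp add: cm_def)
  then show ?thesis by (simp add: atLeast0AtMost)
qed

lemma binom_sum2:
  assumes "cm c (t :: 'a::real_normed_vector bop)"
  shows "(\<Sum>m=0..n. real (n choose m) *\<^sub>R (c^(n-m) * (-t)^m)) = (c - t) ^ n"
proof -
  have "cm (c^(n-m)) ((-t)^m)" for m using assms by simp
  then have "(\<Sum>m=0..n. real (n choose m) *\<^sub>R (c^(n-m) * (-t)^m)) =
     (\<Sum>m=0..n. real (n choose m) *\<^sub>R ((-t)^m * c^(n-m)))" by (simp add: cm_def)
  then show ?thesis using binom_sum1[OF assms] by simp
qed

locale qop = qsp L R for L R :: "quat \<Rightarrow> 'a::banach \<Rightarrow> 'a" +
  fixes T :: "'a \<Rightarrow> 'a"
  assumes Tq: "qbounded_op R T"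
begin

definition t :: "'a bop" where "t = Bop T"
lemma app_t[simp]: "app t = T" unfolding t_def
  using Tq by (simp add: qbounded_op_def app_Bop)
lemma cm_Rb_t[simp]: "cm (Rb q) t" "cm t (Rb q)"
  using Tq by (auto simp: cm_def qbounded_op_def intro!: bop_eqI)

lemma cm_Rb_cnj[simp]: "cm (Rb q) (Rb (qcnj q))" "cm (Rb (qcnj q)) (Rb q)"
  by (simp_all add: cm_def Rb_comm qcnj_comm)

definition Qb :: "quat \<Rightarrow> 'a bop" where
  "Qb s = t * t - (2 * qRe s) *\<^sub>R t + (qnorm s)\<^sup>2 *\<^sub>R 1"

lemma Qop_app: "Qop s T = app (Qb s)"
  by (simp add: Qop_def Qb_def fun_eq_iff)

lemma Qb_cnj: "Qb (qcnj s) = Qb s" by (simp add: Qb_def)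

lemma cm_Qb[simp]: "cm (Qb s) (Rb q)" "cm (Qb s) t"
  by (simp_all add: Qb_def)

lemma Rb_cnj_prod: "Rb s * Rb (qcnj s) = (qnorm s)\<^sup>2 *\<^sub>R 1" "Rb (qcnj s) * Rb s = (qnorm s)\<^sup>2 *\<^sub>R 1"
  by (simp_all add: Rb_mult[symmetric] mult_qcnj Rb_real)

lemma Qb_factor: "Qb s = (Rb s - t) * (Rb (qcnj s) - t)"
proof -
  have "(Rb s - t) * (Rb (qcnj s) - t) = Rb s * Rb (qcnj s) - t * (Rb s + Rb (qcnj s)) + t * t"
    using cm_Rb_t by (simp add: algebra_simps cm_def)
  also have "Rb s + Rb (qcnj s) = (2 * qRe s) *\<^sub>R 1" by (simp add: Rb_add[symmetric] add_qcnj Rb_real)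
  finally show ?thesis by (simp add: Qb_def Rb_cnj_prod algebra_simps)
qed

lemma Qinv_app:
  assumes "x * Qb s = 1" "Qb s * x = 1"
  shows "Qinv s T = app x"
  unfolding Qinv_def Qop_app
  by (rule inv_unique_comp) (use assms in \<open>auto simp: fun_eq_iff dest!: arg_cong[where f=app]\<close>)

definition e :: "quat \<Rightarrow> 'a bop \<Rightarrow> 'a bop" where
  "e q x = (Rb q - t) * Rb (qcnj q) * x"

lemma e_inv:
  assumes x1: "x * Qb q = 1" and x2: "Qb q * x = 1" and q: "qnorm q \<noteq> 0"
  shows "(1 - (1 / (qnorm q)\<^sup>2) *\<^sub>R (Rb q * t)) * e q x = 1"
proof -
  define N where "N = (qnorm q)\<^sup>2"
  have N: "N \<noteq> 0" using q by (simp add: N_def)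
  have cx: "cm x (Rb p)" "cm x t" for p using cm_inv[OF x1 x2] by simp_all
  have "1 - (1 / N) *\<^sub>R (Rb q * t) = (1 / N) *\<^sub>R ((Rb (qcnj q) - t) * Rb q)"
    using N cm_Rb_t by (simp add: algebra_simps Rb_cnj_prod N_def[symmetric] cm_def)
  then have "(1 - (1 / N) *\<^sub>R (Rb q * t)) * e q x
      = (1 / N) *\<^sub>R ((Rb (qcnj q) - t) * (Rb q * (Rb q - t)) * Rb (qcnj q) * x)"
    by (simp add: e_def mult.assoc)
  also have "Rb q * (Rb q - t) = (Rb q - t) * Rb q" by (simp add: cm_def[symmetric])
  also have "(Rb (qcnj q) - t) * ((Rb q - t) * Rb q) * Rb (qcnj q) * x
      = ((Rb q - t) * (Rb (qcnj q) - t)) * (Rb q * Rb (qcnj q)) * x"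
  proof -
    have "cm (Rb (qcnj q) - t) (Rb q - t)" by simp
    then show ?thesis by (simp add: cm_def mult.assoc[symmetric])
  qed
  also have "\<dots> = N *\<^sub>R 1" using x2 by (simp add: Qb_factor[symmetric] Rb_cnj_prod N_def)
  finally show ?thesis using N by (simp add: N_def)
qed

end


context qop begin

lemma app_uminus_t: "app (-t) = (\<lambda>w. - T w)" by (rule ext) simp

lemma e_pow:
  assumes "cm x (Rb s)" "cm x (Rb (qcnj s))" "cm x t"
  shows "e s x ^ n = (Rb s - t)^n * Rb (qcnj s) ^ n * x ^ n"
proof -
  have "cm ((Rb s - t) * Rb (qcnj s)) x" using assms by (simp add: cm_sym)
  moreover have "cm (Rb s - t) (Rb (qcnj s))" by simp
  ultimately show ?thesis unfolding e_def by (simp add: pow_mult_cm)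
qed

lemma YL_formula:
  assumes x1: "x * Qb s = 1" and x2: "Qb s * x = 1"
  shows "YL L n s T = app (t^n * e s x ^ n * Pp (qJ s) + t^n * e (qcnj s) x ^ n * Pm (qJ s))"
proof -
  define a b j where "a = Rb s" and "b = Rb (qcnj s)" and "j = qJ s"
  have uj: "unitim j" unfolding j_def by (rule unitim_qJ)
  have ijs: "inJ j s" unfolding j_def by (rule inJ_qJ)
  have ijc: "inJ j (qcnj s)" by (rule inJ_qcnj[OF uj ijs])
  have cx: "cm x (Rb p)" "cm x t" for p using cm_inv[OF x1 x2] by simp_all
  have ab: "cm a b" "cm b a" "cm a t" "cm b t" "cm t a" "cm t b" unfolding a_def b_def by simp_all
  have step1: "YL L n s T = app (t^n * x^n * (\<Sum>m=0..n. real (n choose m) *\<^sub>R ((-t)^m * Lb (qcnj s^(n-m) * s^n))))"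
    by (simp add: YL_def SL_neg_def Qinv_app[OF x1 x2] app_power app_sum L_mult fun_eq_iff app_uminus_t)
  have step2: "Lb (qcnj s^(n-m) * s^n) = a^(n-m) * b^n * Pp j + b^(n-m) * a^n * Pm j" for m
  proof -
    have ip: "inJ j (qcnj s^(n-m) * s^n)" by (intro inJ_mult inJ_power uj ijs ijc)
    have c1: "Rb (qcnj (qcnj s^(n-m) * s^n)) = a^(n-m) * b^n"
      by (simp add: qcnj_mult qcnj_power Rb_mult Rb_power a_def b_def)
    have "Rb (qcnj s^(n-m) * s^n) = a^n * b^(n-m)"
      by (simp add: Rb_mult Rb_power a_def b_def)
    also have "\<dots> = b^(n-m) * a^n" using ab by (simp add: cm_def[symmetric])
    finally show ?thesis using decomp(1)[OF uj ip] c1 by simp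
  qed
  have step3: "(\<Sum>m=0..n. real (n choose m) *\<^sub>R ((-t)^m * Lb (qcnj s^(n-m) * s^n)))
      = (a - t)^n * (b^n * Pp j) + (b - t)^n * (a^n * Pm j)"
  proof -
    have "(\<Sum>m=0..n. real (n choose m) *\<^sub>R ((-t)^m * Lb (qcnj s^(n-m) * s^n)))
      = (\<Sum>m=0..n. real (n choose m) *\<^sub>R ((-t)^m * a^(n-m) * (b^n * Pp j)))
        + (\<Sum>m=0..n. real (n choose m) *\<^sub>R ((-t)^m * b^(n-m) * (a^n * Pm j)))"
      unfolding step2 by (simp add: distrib_left scaleR_add_right sum.distrib mult.assoc)
    also have "\<dots> = (\<Sum>m=0..n. real (n choose m) *\<^sub>R ((-t)^m * a^(n-m))) * (b^n * Pp j)
        + (\<Sum>m=0..n. real (n choose m) *\<^sub>R ((-t)^m * b^(n-m))) * (a^n * Pm j)"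
      by (simp add: sum_scale_mult_right)
    also have "\<dots> = (a - t)^n * (b^n * Pp j) + (b - t)^n * (a^n * Pm j)"
      using ab by (simp add: binom_sum1)
    finally show ?thesis .
  qed
  have e1: "x^n * ((a - t)^n * b^n) = e s x ^ n"
  proof -
    have "cm (x^n) ((a - t)^n * b^n)" using cx unfolding a_def b_def by simp
    then show ?thesis using e_pow[of x s n] cx unfolding a_def b_def by (simp add: cm_def mult.assoc)
  qed
  have e2: "x^n * ((b - t)^n * a^n) = e (qcnj s) x ^ n"
  proof -
    have "cm (x^n) ((b - t)^n * a^n)" using cx unfolding a_def b_def by simp
    then show ?thesis using e_pow[of x "qcnj s" n] cx unfolding a_def b_def by (simp add: cm_def mult.assoc)
  qed
  show ?thesis unfolding step1 step3
    by (simp add: distrib_left mult.assoc e1[symmetric] e2[symmetric] j_def)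
qed

lemma YR_formula:
  assumes x1: "x * Qb s = 1" and x2: "Qb s * x = 1"
  shows "YR L n s T = app (Pp (qJ s) * e s x ^ n * t^n + Pm (qJ s) * e (qcnj s) x ^ n * t^n)"
proof -
  define a b j where "a = Rb s" and "b = Rb (qcnj s)" and "j = qJ s"
  have uj: "unitim j" unfolding j_def by (rule unitim_qJ)
  have ijs: "inJ j s" unfolding j_def by (rule inJ_qJ)
  have ijc: "inJ j (qcnj s)" by (rule inJ_qcnj[OF uj ijs])
  have cx: "cm x (Rb p)" "cm x t" for p using cm_inv[OF x1 x2] by simp_all
  have ab: "cm a b" "cm b a" "cm a t" "cm b t" "cm t a" "cm t b" unfolding a_def b_def by simp_all
  have step1: "YR L n s T = app (Lb (s^n) * (\<Sum>m=0..n. real (n choose m) *\<^sub>R (Lb (qcnj s^(n-m)) * (-t)^m)) * x^n * t^n)"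
    by (simp add: YR_def SR_neg_def Qinv_app[OF x1 x2] app_power app_sum fun_eq_iff app_uminus_t)
  have step2: "Lb (s^n * qcnj s^(n-m)) = Pp j * (b^n * a^(n-m)) + Pm j * (a^n * b^(n-m))" for m
  proof -
    have ip: "inJ j (s^n * qcnj s^(n-m))" by (intro inJ_mult inJ_power uj ijs ijc)
    have c1: "Rb (qcnj (s^n * qcnj s^(n-m))) = b^n * a^(n-m)"
      by (simp add: qcnj_mult qcnj_power Rb_mult Rb_power a_def b_def)
    have "Rb (s^n * qcnj s^(n-m)) = b^(n-m) * a^n"
      by (simp add: Rb_mult Rb_power a_def b_def)
    also have "\<dots> = a^n * b^(n-m)" using ab by (simp add: cm_def[symmetric])
    finally show ?thesis using decomp(2)[OF uj ip] c1 by simp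
  qed
  have step3: "Lb (s^n) * (\<Sum>m=0..n. real (n choose m) *\<^sub>R (Lb (qcnj s^(n-m)) * (-t)^m))
      = Pp j * (b^n * (a - t)^n) + Pm j * (a^n * (b - t)^n)"
  proof -
    have "Lb (s^n) * (\<Sum>m=0..n. real (n choose m) *\<^sub>R (Lb (qcnj s^(n-m)) * (-t)^m))
      = (\<Sum>m=0..n. real (n choose m) *\<^sub>R (Lb (s^n * qcnj s^(n-m)) * (-t)^m))"
      by (simp add: sum_scale_mult_left[symmetric] Lb_mult mult.assoc)
    also have "\<dots> = (\<Sum>m=0..n. real (n choose m) *\<^sub>R ((Pp j * b^n) * (a^(n-m) * (-t)^m)))
        + (\<Sum>m=0..n. real (n choose m) *\<^sub>R ((Pm j * a^n) * (b^(n-m) * (-t)^m)))"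
      unfolding step2 by (simp add: distrib_right scaleR_add_right sum.distrib mult.assoc)
    also have "\<dots> = (Pp j * b^n) * (\<Sum>m=0..n. real (n choose m) *\<^sub>R (a^(n-m) * (-t)^m))
        + (Pm j * a^n) * (\<Sum>m=0..n. real (n choose m) *\<^sub>R (b^(n-m) * (-t)^m))"
      by (simp add: sum_scale_mult_left)
    also have "\<dots> = Pp j * (b^n * (a - t)^n) + Pm j * (a^n * (b - t)^n)"
      using ab by (simp add: binom_sum2 mult.assoc)
    finally show ?thesis .
  qed
  have e1: "b^n * (a - t)^n * x^n = e s x ^ n"
  proof -
    have "cm (b^n) ((a - t)^n)" using ab by simp
    then show ?thesis using e_pow[of x s n] cx unfolding a_def b_def by (simp add: cm_def)
  qed
  have e2: "a^n * (b - t)^n * x^n = e (qcnj s) x ^ n"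
  proof -
    have "cm (a^n) ((b - t)^n)" using ab by simp
    then show ?thesis using e_pow[of x "qcnj s" n] cx unfolding a_def b_def by (simp add: cm_def)
  qed
  show ?thesis unfolding step1 step3
    by (simp add: distrib_right mult.assoc e1[symmetric] e2[symmetric] j_def)
qed

end


lemma neumann:
  fixes V :: "'a::banach bop"
  assumes bnd: "\<And>k v. norm (app (V^k) v) \<le> K * \<rho>^k * norm v" and r0: "0 \<le> \<rho>" and r1: "\<rho> < 1"
  shows "\<exists>W. W * (1 - V) = 1 \<and> (1 - V) * W = 1"
proof -
  have sn: "summable (\<lambda>k. norm (app (V^k) v))" for v
    by (rule summable_comparison_test'[where g="\<lambda>k. K * norm v * \<rho>^k"])
       (use bnd r0 r1 in \<open>auto simp: summable_geometric mult_ac\<close>)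
  have s: "summable (\<lambda>k. app (V^k) v)" for v using summable_norm_cancel[OF sn] .
  define f where "f v = (\<Sum>k. app (V^k) v)" for v
  have lin: "bounded_linear f"
  proof (rule bounded_linear_intro[where K="\<Sum>k. K * \<rho>^k"])
    fix v w show "f (v + w) = f v + f w"
      unfolding f_def by (simp add: linear_simps(1)[OF bl_app] suminf_add[OF s s])
  next
    fix r v show "f (r *\<^sub>R v) = r *\<^sub>R f v"
      unfolding f_def by (simp add: linear_simps(5)[OF bl_app] suminf_scaleR_right[OF s])
  next
    fix v
    have "norm (f v) \<le> (\<Sum>k. norm (app (V^k) v))" unfolding f_def by (rule summable_norm[OF sn])
    also have "\<dots> \<le> (\<Sum>k. K * \<rho>^k * norm v)"
      by (rule suminf_le) (use bnd r0 r1 sn in \<open>auto simp: summable_geometric intro!: summable_mult2\<close>)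
    also have "\<dots> = (\<Sum>k. K * \<rho>^k) * norm v"
      by (rule suminf_mult2[symmetric]) (use r0 r1 in \<open>auto intro!: summable_mult summable_geometric\<close>)
    finally show "norm (f v) \<le> norm v * (\<Sum>k. K * \<rho>^k)" by (simp add: mult.commute)
  qed
  define W where "W = Bop f"
  have aW: "app W = f" unfolding W_def by (rule app_Bop[OF lin])
  have sh: "(\<Sum>k. app (V^Suc k) v) = f v - v" for v
    using suminf_split_head[OF s[of v]] unfolding f_def by simp
  have "W * (1 - V) = 1"
  proof (rule bop_eqI)
    fix v
    have "app (W * (1 - V)) v = f v - f (app V v)"
      by (simp add: aW linear_simps(2)[OF lin])
    also have "f (app V v) = (\<Sum>k. app (V^Suc k) v)"
      unfolding f_def by (simp only: power_Suc2 app_simps)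
    finally show "app (W * (1 - V)) v = app 1 v" using sh by simp
  qed
  moreover have "(1 - V) * W = 1"
  proof (rule bop_eqI)
    fix v
    have "app ((1 - V) * W) v = f v - app V (f v)" by (simp add: aW)
    also have "app V (f v) = (\<Sum>k. app (V^Suc k) v)"
      unfolding f_def by (simp add: bounded_linear.suminf[OF bl_app s])
    finally show "app ((1 - V) * W) v = app 1 v" using sh by simp
  qed
  ultimately show ?thesis by blast
qed

locale qpb = qop L R T for L R :: "quat \<Rightarrow> 'a::banach \<Rightarrow> 'a" and T +
  fixes M :: real
  assumes pb: "\<And>k v. norm ((T^^k) v) \<le> M * norm v" and M0: "0 \<le> M"
begin

definition Nn :: "'a \<Rightarrow> real" where "Nn v = (SUP k. norm ((T^^k) v))"

lemma appt_pow: "app (t^k) = T^^k" by (simp add: app_power)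

lemma bdd: "bdd_above (range (\<lambda>k. norm ((T^^k) v)))"
  using pb by (intro bdd_aboveI2[where M="M * norm v"]) auto

lemma Nn_ge: "norm ((T^^k) v) \<le> Nn v" unfolding Nn_def by (rule cSUP_upper[OF _ bdd]) simp
lemma Nn_ge0: "norm v \<le> Nn v" using Nn_ge[of 0 v] by simp
lemma Nn_le: "Nn v \<le> M * norm v" unfolding Nn_def by (rule cSUP_least) (auto simp: pb)

lemma Nn_add: "Nn (v + w) \<le> Nn v + Nn w"
  unfolding Nn_def[of "v + w"]
proof (rule cSUP_least)
  fix k
  have "(T^^k) (v + w) = (T^^k) v + (T^^k) w"
    using linear_simps(1)[OF bl_app[of "t^k"]] by (simp add: appt_pow)
  then show "norm ((T^^k) (v + w)) \<le> Nn v + Nn w"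
    using norm_triangle_ineq[of "(T^^k) v" "(T^^k) w"] Nn_ge[of k v] Nn_ge[of k w] by simp
qed simp

lemma Nn_scale: "Nn (c *\<^sub>R v) \<le> \<bar>c\<bar> * Nn v"
  unfolding Nn_def[of "c *\<^sub>R v"]
proof (rule cSUP_least)
  fix k
  have "(T^^k) (c *\<^sub>R v) = c *\<^sub>R (T^^k) v"
    using linear_simps(5)[OF bl_app[of "t^k"]] by (simp add: appt_pow)
  then show "norm ((T^^k) (c *\<^sub>R v)) \<le> \<bar>c\<bar> * Nn v"
    by (simp add: Nn_ge mult_left_mono)
qed simp

lemma Nn_T: "Nn ((T^^n) v) \<le> Nn v"
  unfolding Nn_def[of "(T^^n) v"]
proof (rule cSUP_least)
  fix k show "norm ((T^^k) ((T^^n) v)) \<le> Nn v"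
    using Nn_ge[of "k + n" v] by (simp add: funpow_add)
qed simp

lemma Nn_R: "Nn (R q v) \<le> qnorm q * Nn v"
  unfolding Nn_def[of "R q v"]
proof (rule cSUP_least)
  fix k
  have "cm (t^k) (Rb q)" by simp
  then have "app (t^k) (R q v) = R q (app (t^k) v)" unfolding cm_def
    by (metis app_Rb app_simps(6))
  then show "norm ((T^^k) (R q v)) \<le> qnorm q * Nn v"
    by (simp add: appt_pow normR Nn_ge mult_left_mono qnorm_nonneg)
qed simp

lemma Nn_V: "Nn (app (c *\<^sub>R (t * Rb q)) y) \<le> \<bar>c\<bar> * qnorm q * Nn y"
proof -
  have "Nn (app (c *\<^sub>R (t * Rb q)) y) \<le> \<bar>c\<bar> * Nn (T (R q y))" using Nn_scale by simp
  also have "Nn (T (R q y)) \<le> Nn (R q y)" using Nn_T[of 1] by simp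
  also have "\<dots> \<le> qnorm q * Nn y" by (rule Nn_R)
  finally show ?thesis by (simp add: mult.assoc mult_left_mono)
qed

lemma Nn_e:
  assumes E: "(1 - c *\<^sub>R (t * Rb q)) * E = 1" and c0: "0 \<le> c" and c1: "c * qnorm q < 1"
  shows "Nn (app E v) \<le> Nn v / (1 - c * qnorm q)"
proof -
  define w where "w = app E v"
  have "app ((1 - c *\<^sub>R (t * Rb q)) * E) v = v" using E by simp
  then have wv: "w = v + app (c *\<^sub>R (t * Rb q)) w" unfolding w_def by (simp add: algebra_simps)
  have "Nn w = Nn (v + app (c *\<^sub>R (t * Rb q)) w)" using arg_cong[OF wv, of Nn] .
  also have "\<dots> \<le> Nn v + Nn (app (c *\<^sub>R (t * Rb q)) w)" by (rule Nn_add)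
  also have "\<dots> \<le> Nn v + c * qnorm q * Nn w" using Nn_V[of c q w] c0 by simp
  finally have "Nn w \<le> Nn v + c * qnorm q * Nn w" .
  then have "Nn w * (1 - c * qnorm q) \<le> Nn v" by (simp add: algebra_simps)
  then show ?thesis unfolding w_def[symmetric] using c1 by (simp add: pos_le_divide_eq)
qed

lemma Nn_epow:
  assumes E: "(1 - c *\<^sub>R (t * Rb q)) * E = 1" and c0: "0 \<le> c" and c1: "c * qnorm q < 1"
  shows "Nn (app (E^n) v) \<le> Nn v / (1 - c * qnorm q)^n"
proof (induction n)
  case (Suc n)
  have "Nn (app (E^Suc n) v) \<le> Nn (app (E^n) v) / (1 - c * qnorm q)"
    using Nn_e[OF E c0 c1, of "app (E^n) v"] by simp
  also have "\<dots> \<le> Nn v / (1 - c * qnorm q)^n / (1 - c * qnorm q)"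
    using c1 by (intro divide_right_mono Suc.IH) simp
  finally show ?case by (simp add: field_simps)
qed simp

lemma bound_tE:
  assumes E: "(1 - c *\<^sub>R (t * Rb q)) * E = 1" and c0: "0 \<le> c" and c1: "c * qnorm q < 1"
  shows "bn (t^n * E^n) \<le> M / (1 - c * qnorm q)^n" "bn (E^n * t^n) \<le> M / (1 - c * qnorm q)^n"
proof -
  have d: "0 < (1 - c * qnorm q)^n" using c1 by simp
  show "bn (t^n * E^n) \<le> M / (1 - c * qnorm q)^n"
  proof (rule bn_bound)
    show "0 \<le> M / (1 - c * qnorm q)^n" using M0 d by simp
    fix v
    have "norm (app (t^n * E^n) v) \<le> Nn (app (E^n) v)"
      using Nn_ge[of n "app (E^n) v"] by (simp add: appt_pow)
    also have "\<dots> \<le> Nn v / (1 - c * qnorm q)^n" by (rule Nn_epow[OF E c0 c1])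
    also have "\<dots> \<le> M * norm v / (1 - c * qnorm q)^n" using Nn_le d by (simp add: divide_right_mono)
    finally show "norm (app (t^n * E^n) v) \<le> M / (1 - c * qnorm q)^n * norm v" by simp
  qed
  show "bn (E^n * t^n) \<le> M / (1 - c * qnorm q)^n"
  proof (rule bn_bound)
    show "0 \<le> M / (1 - c * qnorm q)^n" using M0 d by simp
    fix v
    have "norm (app (E^n * t^n) v) \<le> Nn (app (E^n) ((T^^n) v))"
      using Nn_ge0 by (simp add: appt_pow)
    also have "\<dots> \<le> Nn ((T^^n) v) / (1 - c * qnorm q)^n" by (rule Nn_epow[OF E c0 c1])
    also have "\<dots> \<le> Nn v / (1 - c * qnorm q)^n" using Nn_T d by (simp add: divide_right_mono)
    also have "\<dots> \<le> M * norm v / (1 - c * qnorm q)^n" using Nn_le d by (simp add: divide_right_mono)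
    finally show "norm (app (E^n * t^n) v) \<le> M / (1 - c * qnorm q)^n * norm v" by simp
  qed
qed

lemma Vpow_bound:
  assumes c0: "0 \<le> c"
  shows "norm (app ((c *\<^sub>R (t * Rb q))^k) v) \<le> M * (c * qnorm q)^k * norm v"
proof -
  have "Nn (app ((c *\<^sub>R (t * Rb q))^k) v) \<le> (c * qnorm q)^k * Nn v"
  proof (induction k)
    case (Suc k)
    have "Nn (app ((c *\<^sub>R (t * Rb q))^Suc k) v) \<le> c * qnorm q * Nn (app ((c *\<^sub>R (t * Rb q))^k) v)"
      using Nn_V[of c q] c0 by simp
    also have "\<dots> \<le> c * qnorm q * ((c * qnorm q)^k * Nn v)"
      using Suc.IH c0 qnorm_nonneg by (intro mult_left_mono) auto
    finally show ?case by (simp add: mult.assoc)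
  qed simp
  moreover have "Nn v \<le> M * norm v" by (rule Nn_le)
  moreover have "0 \<le> (c * qnorm q)^k" using c0 qnorm_nonneg by simp
  ultimately have "Nn (app ((c *\<^sub>R (t * Rb q))^k) v) \<le> (c * qnorm q)^k * (M * norm v)"
    by (meson order_trans mult_left_mono)
  then show ?thesis using Nn_ge0[of "app ((c *\<^sub>R (t * Rb q))^k) v"] by (simp add: mult_ac)
qed

end


lemma bn_diff: "bn (f - g) \<le> bn f + bn g"
  by (rule bn_bound) (auto simp: bn_nonneg add_nonneg_nonneg distrib_right
      intro!: order_trans[OF norm_triangle_ineq4] add_mono bn_app)

lemma limit_arg:
  fixes a b C z :: real
  assumes h: "\<And>r. r > 1 \<Longrightarrow> a \<le> (1 + b / r)^n * (C / (1 - 1 / r)^n * z)"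
  shows "a \<le> C * z"
proof -
  have l0: "((\<lambda>r::real. 1 / r) \<longlongrightarrow> 0) at_top"
    using tendsto_inverse_0_at_top[OF filterlim_ident] by (simp add: inverse_eq_divide)
  have l1: "((\<lambda>r::real. b / r) \<longlongrightarrow> 0) at_top"
    using tendsto_mult[OF tendsto_const[of b] l0] by simp
  have "((\<lambda>r::real. (1 + b / r)^n * (C / (1 - 1 / r)^n * z)) \<longlongrightarrow> (1 + 0)^n * (C / (1 - 0)^n * z)) at_top"
    by (intro tendsto_intros l0 l1) simp
  then have lim: "((\<lambda>r::real. (1 + b / r)^n * (C / (1 - 1 / r)^n * z)) \<longlongrightarrow> C * z) at_top" by simp
  have ev: "eventually (\<lambda>r. a \<le> (1 + b / r)^n * (C / (1 - 1 / r)^n * z)) at_top"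
    unfolding eventually_at_top_dense using h by blast
  show ?thesis by (rule tendsto_le[OF trivial_limit_at_top_linorder lim tendsto_const ev])
qed

context qpb begin

lemma exists_inv:
  assumes s: "qnorm s > 1"
  shows "\<exists>x. x * Qb s = 1 \<and> Qb s * x = 1"
proof -
  define N where "N = (qnorm s)\<^sup>2"
  define c where "c = 1 / N"
  have N0: "N > 0" using s by (simp add: N_def)
  have c0: "0 \<le> c" using N0 by (simp add: c_def)
  have cq: "c * qnorm s = 1 / qnorm s" using s by (simp add: c_def N_def power2_eq_square)
  have cq1: "c * qnorm s < 1" "0 \<le> c * qnorm s" unfolding cq using s by auto
  define V1 where "V1 = c *\<^sub>R (t * Rb (qcnj s))"
  define V2 where "V2 = c *\<^sub>R (t * Rb s)"
  obtain W1 where W1: "W1 * (1 - V1) = 1" "(1 - V1) * W1 = 1"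
    using neumann[of V1 M "c * qnorm s"] Vpow_bound[OF c0, of "qcnj s"] cq1 unfolding V1_def by auto
  obtain W2 where W2: "W2 * (1 - V2) = 1" "(1 - V2) * W2 = 1"
    using neumann[of V2 M "c * qnorm s"] Vpow_bound[OF c0, of s] cq1 unfolding V2_def by auto
  have ct: "Rb q * t = t * Rb q" "Rb q * (t * z) = t * (Rb q * z)" for q z
    using cm_Rb_t(1)[of q] by (simp_all add: cm_def mult.assoc[symmetric])
  have "(1 - V1) * (1 - V2) = 1 - c *\<^sub>R (t * (Rb (qcnj s) + Rb s)) + (c * c) *\<^sub>R (t * t * (Rb (qcnj s) * Rb s))"
    unfolding V1_def V2_def by (simp add: algebra_simps ct)
  also have "Rb (qcnj s) + Rb s = (2 * qRe s) *\<^sub>R 1" by (simp add: Rb_add[symmetric] add_qcnj Rb_real)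
  also have "Rb (qcnj s) * Rb s = N *\<^sub>R 1" by (simp add: Rb_cnj_prod N_def)
  finally have eq2: "(1 - V1) * (1 - V2) = 1 - (c * (2 * qRe s)) *\<^sub>R t + (c * c * N) *\<^sub>R (t * t)"
    by simp
  have "N *\<^sub>R ((1 - V1) * (1 - V2)) = Qb s"
    unfolding eq2 Qb_def using N0 by (simp add: c_def algebra_simps N_def[symmetric])
  then have Qe: "Qb s = N *\<^sub>R ((1 - V1) * (1 - V2))" ..
  define x where "x = c *\<^sub>R (W2 * W1)"
  have "x * Qb s = (c * N) *\<^sub>R (W2 * (W1 * (1 - V1)) * (1 - V2))"
    unfolding x_def Qe by (simp add: mult.assoc)
  also have "\<dots> = 1" using N0 W1 W2 by (simp add: c_def)
  finally have 1: "x * Qb s = 1" .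
  have "Qb s * x = (N * c) *\<^sub>R ((1 - V1) * ((1 - V2) * W2) * W1)"
    unfolding x_def Qe by (simp add: mult.assoc)
  also have "\<dots> = 1" using N0 W1 W2 by (simp add: c_def)
  finally have 2: "Qb s * x = 1" .
  from 1 2 show ?thesis by blast
qed

lemma in_resolvent:
  assumes s: "qnorm s > 1"
  shows "s \<in> S_resolvent_set R T"
proof -
  obtain x where x: "x * Qb s = 1" "Qb s * x = 1" using exists_inv[OF s] by blast
  have cx: "cm x (Rb q)" for q using cm_inv[OF x] by simp
  have "qbounded_op R (app x)"
    unfolding qbounded_op_def
  proof (intro conjI allI)
    show "bounded_linear (app x)" by (rule bl_app)
    fix q v show "app x (R q v) = R q (app x v)"
      using arg_cong[OF cx[of q, unfolded cm_def], of "\<lambda>f. app f v"] by simp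
  qed
  moreover have "app x \<circ> Qop s T = id" "Qop s T \<circ> app x = id"
    unfolding Qop_app using x by (auto simp: fun_eq_iff dest!: arg_cong[where f=app])
  ultimately show ?thesis unfolding S_resolvent_set_def by blast
qed

lemma e_bound:
  assumes s: "qnorm s > 1" and x: "x * Qb s = 1" "Qb s * x = 1"
  shows "bn (t^n * e s x^n) \<le> M / (1 - 1 / qnorm s)^n" "bn (e s x^n * t^n) \<le> M / (1 - 1 / qnorm s)^n"
proof -
  have q0: "qnorm s \<noteq> 0" using s by simp
  have cq: "1 / (qnorm s)\<^sup>2 * qnorm s = 1 / qnorm s" using s by (simp add: power2_eq_square)
  have E: "(1 - (1 / (qnorm s)\<^sup>2) *\<^sub>R (t * Rb s)) * e s x = 1"
    using e_inv[OF x q0] cm_Rb_t(1)[of s] by (simp add: cm_def)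
  have c1: "1 / (qnorm s)\<^sup>2 * qnorm s < 1" unfolding cq using s by simp
  show "bn (t^n * e s x^n) \<le> M / (1 - 1 / qnorm s)^n" "bn (e s x^n * t^n) \<le> M / (1 - 1 / qnorm s)^n"
    using bound_tE[OF E _ c1, of n] unfolding cq by simp_all
qed

lemma e_bound_cnj:
  assumes s: "qnorm s > 1" and x: "x * Qb s = 1" "Qb s * x = 1"
  shows "bn (t^n * e (qcnj s) x^n) \<le> M / (1 - 1 / qnorm s)^n" "bn (e (qcnj s) x^n * t^n) \<le> M / (1 - 1 / qnorm s)^n"
  using e_bound[of "qcnj s" x n] s x by (simp_all add: Qb_cnj)

lemma YL_bound:
  assumes s: "qnorm s > 1"
  shows "onorm (YL L n s T) \<le> 2 * M / (1 - 1 / qnorm s)^n"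
proof -
  obtain x where x: "x * Qb s = 1" "Qb s * x = 1" using exists_inv[OF s] by blast
  define A B where "A = t^n * e s x ^ n" and "B = t^n * e (qcnj s) x ^ n"
  have "onorm (YL L n s T) = bn (A * Pp (qJ s) + B * Pm (qJ s))"
    unfolding YL_formula[OF x] A_def B_def bn_def ..
  also have "\<dots> \<le> bn A * bn (Pp (qJ s)) + bn B * bn (Pm (qJ s))"
    by (meson add_mono bn_add bn_mult order_trans)
  also have "\<dots> \<le> bn A * 1 + bn B * 1"
    using bn_Pp[OF unitim_qJ[of s]] by (intro add_mono mult_left_mono bn_nonneg) auto
  also have "\<dots> \<le> M / (1 - 1 / qnorm s)^n + M / (1 - 1 / qnorm s)^n"
    using e_bound(1)[OF s x, of n] e_bound_cnj(1)[OF s x, of n] unfolding A_def B_def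
    by (simp only: mult_1_right mult_1_left)
  finally show ?thesis by simp
qed

lemma YR_bound:
  assumes s: "qnorm s > 1"
  shows "onorm (YR L n s T) \<le> 2 * M / (1 - 1 / qnorm s)^n"
proof -
  obtain x where x: "x * Qb s = 1" "Qb s * x = 1" using exists_inv[OF s] by blast
  define A B where "A = e s x ^ n * t^n" and "B = e (qcnj s) x ^ n * t^n"
  have "onorm (YR L n s T) = bn (Pp (qJ s) * A + Pm (qJ s) * B)"
    unfolding YR_formula[OF x] A_def B_def bn_def by (simp add: mult.assoc)
  also have "\<dots> \<le> bn (Pp (qJ s)) * bn A + bn (Pm (qJ s)) * bn B"
    by (meson add_mono bn_add bn_mult order_trans)
  also have "\<dots> \<le> 1 * bn A + 1 * bn B"
    using bn_Pp[OF unitim_qJ[of s]] by (intro add_mono mult_right_mono bn_nonneg) auto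
  also have "\<dots> \<le> M / (1 - 1 / qnorm s)^n + M / (1 - 1 / qnorm s)^n"
    using e_bound(2)[OF s x, of n] e_bound_cnj(2)[OF s x, of n] unfolding A_def B_def
    by (simp only: mult_1_right mult_1_left)
  finally show ?thesis by simp
qed

end

context qop begin

lemma conv_step:
  assumes r: "r > 1" and res: "qreal r \<in> S_resolvent_set R T"
  shows "\<exists>E. YL L n (qreal r) T = app (t^n * E^n) \<and> YR L n (qreal r) T = app (E^n * t^n)
             \<and> (1 - (1/r) *\<^sub>R t) * E = 1"
proof -
  define s where "s = qreal r"
  obtain S where S: "qbounded_op R S" "S \<circ> Qop s T = id" "Qop s T \<circ> S = id"
    using res unfolding S_resolvent_set_def s_def by blast
  define x where "x = Bop S"
  have ax: "app x = S" unfolding x_def using S(1) by (simp add: qbounded_op_def app_Bop)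
  have x1: "x * Qb s = 1" using S(2) by (intro bop_eqI) (simp add: ax Qop_app fun_eq_iff)
  have x2: "Qb s * x = 1" using S(3) by (intro bop_eqI) (simp add: ax Qop_app fun_eq_iff)
  have cs: "qcnj s = s" unfolding s_def by simp
  define E where "E = e s x"
  have "YL L n s T = app (t^n * E^n * (Pp (qJ s) + Pm (qJ s)))"
    unfolding YL_formula[OF x1 x2] cs E_def by (simp add: distrib_left)
  then have 1: "YL L n s T = app (t^n * E^n)" by (simp add: Pp_Pm)
  have "YR L n s T = app ((Pp (qJ s) + Pm (qJ s)) * E^n * t^n)"
    unfolding YR_formula[OF x1 x2] cs E_def by (simp add: distrib_right)
  then have 2: "YR L n s T = app (E^n * t^n)" by (simp add: Pp_Pm)
  have q0: "qnorm s \<noteq> 0" using r by (simp add: s_def)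
  have "(1 - (1 / (qnorm s)\<^sup>2) *\<^sub>R (Rb s * t)) * E = 1" unfolding E_def by (rule e_inv[OF x1 x2 q0])
  moreover have "(1 / (qnorm s)\<^sup>2) *\<^sub>R (Rb s * t) = (1/r) *\<^sub>R t"
    using r by (simp add: s_def Rb_real power2_eq_square)
  ultimately have 3: "(1 - (1/r) *\<^sub>R t) * E = 1" by simp
  show ?thesis using 1 2 3 unfolding s_def by blast
qed

lemma conv_bound:
  assumes C: "\<forall>s n. qnorm s > 1 \<and> n \<ge> 1 \<longrightarrow> onorm (Y n s) \<le> C / (1 - 1 / qnorm s)^n"
    and C0: "C > 0"
    and YE: "\<And>r. r > 1 \<Longrightarrow> \<exists>E. (1 - (1/r) *\<^sub>R t) * E = 1 \<and> (Y n (qreal r) = app (t^n * E^n)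
              \<or> Y n (qreal r) = app (E^n * t^n))"
    and n: "n \<ge> 1"
  shows "onorm (T^^n) \<le> C"
proof -
  have main: "norm ((T^^n) v) \<le> (1 + bn t / r)^n * (C / (1 - 1 / r)^n * norm v)" if r: "r > 1" for r v
  proof -
    obtain E where E: "(1 - (1/r) *\<^sub>R t) * E = 1"
      and YY: "Y n (qreal r) = app (t^n * E^n) \<or> Y n (qreal r) = app (E^n * t^n)"
      using YE[OF r] by blast
    define U where "U = 1 - (1/r) *\<^sub>R t"
    have UE: "U^n * E^n = 1" using left_right_inverse_power[OF E[folded U_def]] .
    have cU: "cm U t" unfolding U_def by simp
    have cUn: "cm (U^n) (t^n)" using cU by simp
    have "U^n * (t^n * E^n) = (U^n * t^n) * E^n" by (simp add: mult.assoc)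
    also have "U^n * t^n = t^n * U^n" using cUn unfolding cm_def .
    also have "t^n * U^n * E^n = t^n" using UE by (simp add: mult.assoc)
    finally have k1: "t^n = U^n * (t^n * E^n)" ..
    have k2: "t^n = U^n * (E^n * t^n)" using UE by (simp add: mult.assoc[symmetric])
    have "\<exists>Z. Y n (qreal r) = app Z \<and> t^n = U^n * Z"
      using YY k1 k2 by blast
    then obtain Z where Z: "Y n (qreal r) = app Z" "t^n = U^n * Z" by blast
    have "(T^^n) v = app (t^n) v" by (simp add: app_power)
    also have "app (t^n) v = app (U^n) (app Z v)" unfolding Z(2) by (simp only: app_simps)
    finally have "norm ((T^^n) v) = norm (app (U^n) (app Z v))" by simp
    also have "\<dots> \<le> bn (U^n) * norm (app Z v)" by (rule bn_app)
    also have "\<dots> \<le> bn (U^n) * (bn Z * norm v)" by (intro mult_left_mono bn_app bn_nonneg)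
    also have "\<dots> \<le> (1 + bn t / r)^n * (C / (1 - 1 / r)^n * norm v)"
    proof (rule mult_mono)
      have "bn ((1/r) *\<^sub>R t) \<le> bn t / r" using bn_scale[of "1/r" t] r by simp
      then have "bn U \<le> 1 + bn t / r"
        unfolding U_def using bn_diff[of 1 "(1/r) *\<^sub>R t"] bn_one[where 'a='a] by linarith
      then show "bn (U^n) \<le> (1 + bn t / r)^n"
        using bn_power[of U n] bn_nonneg[of U] by (meson order_trans power_mono)
      have "bn Z \<le> C / (1 - 1 / r)^n"
        using C[rule_format, of "qreal r" n] r n Z(1) by (simp add: bn_def)
      then show "bn Z * norm v \<le> C / (1 - 1 / r)^n * norm v" by (rule mult_right_mono) simp
      show "0 \<le> (1 + bn t / r)^n" using r bn_nonneg[of t] by simp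
      show "0 \<le> bn Z * norm v" by (simp add: bn_nonneg)
    qed
    finally show ?thesis .
  qed
  show ?thesis
  proof (rule onorm_bound)
    show "0 \<le> C" using C0 by simp
    fix v show "norm ((T^^n) v) \<le> C * norm v" by (rule limit_arg) (rule main)
  qed
qed

end


theorem theorem3p7:
  fixes L R :: "quat \<Rightarrow> 'a::banach \<Rightarrow> 'a" and T :: "'a \<Rightarrow> 'a"
  assumes "two_sided_qbanach L R" and "qbounded_op R T"
  shows "((\<exists>M. \<forall>n\<ge>1. onorm (T ^^ n) \<le> M) \<longleftrightarrow>
            ((\<forall>s. qnorm s > 1 \<longrightarrow> s \<in> S_resolvent_set R T) \<and>
             (\<exists>C>0. \<forall>s n. qnorm s > 1 \<and> n \<ge> 1 \<longrightarrow>
                onorm (YL L n s T) \<le> C / (1 - 1 / qnorm s) ^ n))) \<and>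
         ((\<exists>M. \<forall>n\<ge>1. onorm (T ^^ n) \<le> M) \<longleftrightarrow>
            ((\<forall>s. qnorm s > 1 \<longrightarrow> s \<in> S_resolvent_set R T) \<and>
             (\<exists>C>0. \<forall>s n. qnorm s > 1 \<and> n \<ge> 1 \<longrightarrow>
                onorm (YR L n s T) \<le> C / (1 - 1 / qnorm s) ^ n)))"
proof -
  interpret qop L R T using assms by (simp add: qop_def qsp_def qop_axioms_def)
  have fwd: "(\<forall>s. qnorm s > 1 \<longrightarrow> s \<in> S_resolvent_set R T) \<and>
             (\<exists>C>0. \<forall>s n. qnorm s > 1 \<and> n \<ge> 1 \<longrightarrow>
                onorm (YL L n s T) \<le> C / (1 - 1 / qnorm s) ^ n) \<and>
             (\<exists>C>0. \<forall>s n. qnorm s > 1 \<and> n \<ge> 1 \<longrightarrow>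
                onorm (YR L n s T) \<le> C / (1 - 1 / qnorm s) ^ n)"
    if ex: "\<exists>M. \<forall>n\<ge>1. onorm (T ^^ n) \<le> M"
  proof -
    obtain M where M: "\<forall>n\<ge>1. onorm (T^^n) \<le> M" using ex by blast
    define M' where "M' = max M 1"
    have M1: "1 \<le> M'" "M \<le> M'" by (simp_all add: M'_def)
    have pbd: "norm ((T^^k) v) \<le> M' * norm v" for k v
    proof (cases "k = 0")
      case True
      then show ?thesis using mult_right_mono[OF M1(1) norm_ge_zero[of v]] by simp
    next
      case False
      have bl: "bounded_linear (T^^k)" using bl_app[of "t^k"] by (simp add: app_power)
      have "norm ((T^^k) v) \<le> onorm (T^^k) * norm v" by (rule onorm[OF bl])
      also have "\<dots> \<le> M' * norm v"
      proof (rule mult_right_mono)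
        have "onorm (T^^k) \<le> M" using M False by simp
        then show "onorm (T^^k) \<le> M'" using M1 by linarith
      qed simp
      finally show ?thesis .
    qed
    interpret qpb L R T M' by unfold_locales (rule pbd, use M1 in simp)
    have "2 * M' > 0" using M1 by simp
    then show ?thesis using in_resolvent YL_bound YR_bound by blast
  qed
  have bwd: "\<exists>M. \<forall>n\<ge>1. onorm (T ^^ n) \<le> M"
    if res: "\<forall>s. qnorm s > 1 \<longrightarrow> s \<in> S_resolvent_set R T"
      and C: "\<exists>C>0. \<forall>s n. qnorm s > 1 \<and> n \<ge> 1 \<longrightarrow> onorm (Y n s) \<le> C / (1 - 1 / qnorm s) ^ n"
      and Ych: "Y = (\<lambda>n s. YL L n s T) \<or> Y = (\<lambda>n s. YR L n s T)"
    for Y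
  proof -
    obtain C where C0: "C > 0" and Cb: "\<forall>s n. qnorm s > 1 \<and> n \<ge> 1 \<longrightarrow> onorm (Y n s) \<le> C / (1 - 1 / qnorm s) ^ n"
      using C by blast
    have "onorm (T^^n) \<le> C" if n: "n \<ge> 1" for n
    proof (rule conv_bound[OF Cb C0 _ n])
      fix r :: real assume r: "r > 1"
      have "qreal r \<in> S_resolvent_set R T" using res r by simp
      from conv_step[OF r this, of n] obtain E where
        "YL L n (qreal r) T = app (t^n * E^n)" "YR L n (qreal r) T = app (E^n * t^n)"
        "(1 - (1/r) *\<^sub>R t) * E = 1" by blast
      then show "\<exists>E. (1 - (1/r) *\<^sub>R t) * E = 1 \<and> (Y n (qreal r) = app (t^n * E^n)
              \<or> Y n (qreal r) = app (E^n * t^n))"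
        using Ych by auto
    qed
    then show ?thesis by blast
  qed
  show ?thesis
    using fwd bwd[of "\<lambda>n s. YL L n s T"] bwd[of "\<lambda>n s. YR L n s T"] by blast
qed


end
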